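(* If $\Gamma$ is a mutation-finite connected graph with at least $4$ vertices, then $\Gamma$ does not contain $\mathbf{Z}_3$ as a subgraph.
   Context: A graph here is a finite directed multigraph with no loops and no oriented $2$-cycles; multiple arrows in the same direction are allowed. The mutation $\mu_k\Gamma$ at a vertex $k$: for every pair of arrows $i\to k$, $k\to j$ add an arrow $i\to j$; reverse all arrows incident to $k$; then delete pairs of opposite arrows $i\to j$, $j\to i$ until no oriented $2$-cycles remain. $\Gamma$ is mutation-finite if only finitely many isomorphism classes of graphs are obtainable from it by sequences of mutations. Connected means the underlying undirected graph is connected. Subgraph always means full (induced) subgraph: a subset of the vertices together with all arrows between them. $\mathbf{Z}_3$ is the graph with three vertices $x_1,x_2,x_3$ and exactly two arrows $x_1\to x_2$, two arrows $x_2\to x_3$, and two arrows $x_3\to x_1$. *)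

theory Defs
  imports Main
begin

text \<open>A graph on a finite vertex set V is given by an arrow-count function
  b, where b i j is the number of arrows i -> j (values outside V are irrelevant).\<close>

definition is_graph :: "'v set \<Rightarrow> ('v \<Rightarrow> 'v \<Rightarrow> nat) \<Rightarrow> bool" where
  "is_graph V b \<longleftrightarrow> finite V \<and> (\<forall>i\<in>V. b i i = 0) \<and>
     (\<forall>i\<in>V. \<forall>j\<in>V. b i j = 0 \<or> b j i = 0)"

text \<open>Mutation at k: add i->j for each path i->k->j, reverse arrows at k,
  cancel opposite pairs.\<close>
definition mutate :: "'v \<Rightarrow> ('v \<Rightarrow> 'v \<Rightarrow> nat) \<Rightarrow> ('v \<Rightarrow> 'v \<Rightarrow> nat)" where
  "mutate k b = (\<lambda>i j.
     if i = k then b j k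
     else if j = k then b k i
     else nat ((int (b i j) + int (b i k * b k j)) - (int (b j i) + int (b j k * b k i))))"

inductive_set mut_class :: "'v set \<Rightarrow> ('v \<Rightarrow> 'v \<Rightarrow> nat) \<Rightarrow> ('v \<Rightarrow> 'v \<Rightarrow> nat) set"
  for V b where
  refl: "b \<in> mut_class V b"
| step: "c \<in> mut_class V b \<Longrightarrow> k \<in> V \<Longrightarrow> mutate k c \<in> mut_class V b"

definition graph_iso :: "'v set \<Rightarrow> ('v \<Rightarrow> 'v \<Rightarrow> nat) \<Rightarrow> ('v \<Rightarrow> 'v \<Rightarrow> nat) \<Rightarrow> bool" where
  "graph_iso V b c \<longleftrightarrow> (\<exists>f. bij_betw f V V \<and> (\<forall>i\<in>V. \<forall>j\<in>V. c (f i) (f j) = b i j))"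

definition mutation_finite :: "'v set \<Rightarrow> ('v \<Rightarrow> 'v \<Rightarrow> nat) \<Rightarrow> bool" where
  "mutation_finite V b \<longleftrightarrow>
     (\<exists>S. finite S \<and> (\<forall>c\<in>mut_class V b. \<exists>d\<in>S. graph_iso V d c))"

definition graph_connected :: "'v set \<Rightarrow> ('v \<Rightarrow> 'v \<Rightarrow> nat) \<Rightarrow> bool" where
  "graph_connected V b \<longleftrightarrow>
     (\<forall>x\<in>V. \<forall>y\<in>V. (x, y) \<in> {(u, w). u \<in> V \<and> w \<in> V \<and> (b u w > 0 \<or> b w u > 0)}\<^sup>*)"

definition contains_Z3 :: "'v set \<Rightarrow> ('v \<Rightarrow> 'v \<Rightarrow> nat) \<Rightarrow> bool" where
  "contains_Z3 V b \<longleftrightarrow> (\<exists>x1\<in>V. \<exists>x2\<in>V. \<exists>x3\<in>V. x1 \<noteq> x2 \<and> x2 \<noteq> x3 \<and> x1 \<noteq> x3 \<and>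
     b x1 x2 = 2 \<and> b x2 x3 = 2 \<and> b x3 x1 = 2 \<and>
     b x2 x1 = 0 \<and> b x3 x2 = 0 \<and> b x1 x3 = 0)"

end

theory Submission
  imports Defs
begin


definition cyc :: "('v\<Rightarrow>'v\<Rightarrow>nat) \<Rightarrow> 'v\<Rightarrow>'v\<Rightarrow>'v\<Rightarrow>nat\<Rightarrow>nat\<Rightarrow>nat\<Rightarrow>bool" where
 "cyc c u v w a b d \<longleftrightarrow> u\<noteq>v \<and> v\<noteq>w \<and> u\<noteq>w \<and> c u v = a \<and> c v w = b \<and> c w u = d \<and>
    c v u = 0 \<and> c w v = 0 \<and> c u w = 0"

lemma cyc_rot: "cyc c u v w a b d \<Longrightarrow> cyc c v w u b d a" by (auto simp: cyc_def)

lemma cyc_mut: assumes "cyc c u v w a b d" "b \<le> d*a"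
  shows "cyc (mutate u c) u w v d (d*a - b) a"
proof -
  have H: "u\<noteq>v" "v\<noteq>w" "u\<noteq>w" "c u v = a" "c v w = b" "c w u = d" "c v u = 0" "c w v = 0" "c u w = 0"
    using assms(1) unfolding cyc_def by auto
  have 1: "mutate u c w v = d*a - b"
  proof -
    have "mutate u c w v = nat ((int 0 + int (d*a)) - (int b + int 0))"
      using H unfolding mutate_def by simp
    also have "\<dots> = d*a - b" by (simp only: add_0 add_0_right of_nat_0 nat_diff_distrib' of_nat_0_le_iff nat_int)
    finally show ?thesis .
  qed
  have 2: "mutate u c v w = 0"
  proof -
    have "mutate u c v w = nat ((int b + int 0) - (int 0 + int (d*a)))"
      using H unfolding mutate_def by (simp add: mult.commute)
    also have "\<dots> = 0" using assms(2) by (simp del: of_nat_mult add: of_nat_le_iff)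
    finally show ?thesis .
  qed
  show ?thesis unfolding cyc_def using H 1 2 by (simp add: mutate_def)
qed

lemma arith_step: fixes a b d :: nat assumes "2\<le>a" "2\<le>b" "2\<le>d" "3 \<le> max a (max b d)" "b\<le>a" "b\<le>d"
  shows "b \<le> d*a" "2 \<le> d*a - b" "max a (max b d) + 1 \<le> max d (max (d*a-b) a)"
proof -
  have "2*a \<le> d*a" using assms by simp
  moreover have "2*d \<le> d*a" using assms by simp
  ultimately show "b \<le> d*a" "2 \<le> d*a - b" using assms by linarith+
  show "max a (max b d) + 1 \<le> max d (max (d*a-b) a)"
  proof -
    have m: "max a (max b d) = max a d" using assms by (simp add: max_def)
    have "max a d + 1 \<le> d*a - b"
    proof (cases "b < a \<and> b < d")
      case True
      have "a+1 \<le> d*a - b" "d+1 \<le> d*a-b" using True \<open>2*a \<le> d*a\<close> \<open>2*d \<le> d*a\<close> by linarith+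
      thus ?thesis by (simp add: max_def)
    next
      case False
      hence "a = b \<or> d = b" using assms by linarith
      hence "3*a \<le> d*a \<or> 3*d \<le> d*a" using assms by (auto simp: max_def)
      have h3: "3 \<le> a \<Longrightarrow> 3*d \<le> d*a" "3 \<le> d \<Longrightarrow> 3*a \<le> d*a" by simp_all
      have "3 \<le> a \<or> 3 \<le> d" using assms by (auto simp: max_def split: if_splits)
      hence "a+1 \<le> d*a - b" "d+1 \<le> d*a-b" using \<open>a = b \<or> d = b\<close> \<open>2*a \<le> d*a\<close> \<open>2*d \<le> d*a\<close> assms h3 by linarith+
      thus ?thesis by (simp add: max_def)
    qed
    thus ?thesis unfolding m by (simp add: max_def split: if_splits)
  qed
qed

definition good :: "'v set \<Rightarrow> ('v\<Rightarrow>'v\<Rightarrow>nat) \<Rightarrow> nat \<Rightarrow> bool" where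
"good V c M \<longleftrightarrow> (\<exists>u\<in>V. \<exists>v\<in>V. \<exists>w\<in>V. \<exists>a b d. cyc c u v w a b d \<and> 2\<le>a \<and> 2\<le>b \<and> 2\<le>d \<and>
    M \<le> max a (max b d) \<and> 3 \<le> max a (max b d))"

lemma goodI: "cyc c u v w a b d \<Longrightarrow> u\<in>V \<Longrightarrow> v\<in>V \<Longrightarrow> w\<in>V \<Longrightarrow> 2\<le>a \<Longrightarrow> 2\<le>b \<Longrightarrow> 2\<le>d \<Longrightarrow>
    M \<le> max a (max b d) \<Longrightarrow> 3 \<le> max a (max b d) \<Longrightarrow> good V c M"
  unfolding good_def by blast

lemma good_from:
  assumes "cyc c u v w a b d" "u\<in>V" "v\<in>V" "w\<in>V" "2\<le>a" "2\<le>b" "2\<le>d" "3 \<le> max a (max b d)"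
    "b\<le>a" "b\<le>d" "M \<le> max a (max b d)"
  shows "good V (mutate u c) (Suc M)"
proof -
  note A = arith_step[OF assms(5-10)]
  have c: "cyc (mutate u c) u w v d (d*a - b) a" using cyc_mut[OF assms(1) A(1)] .
  have m: "Suc M \<le> max d (max (d*a-b) a)" using A(3) assms(11) by linarith
  have m3: "3 \<le> max d (max (d*a-b) a)" using A(3) assms(8) by linarith
  show ?thesis by (rule goodI[OF c assms(2) assms(4) assms(3) assms(7) A(2) assms(5) m m3])
qed

lemma good_step: assumes "good V c M" shows "\<exists>k\<in>V. good V (mutate k c) (Suc M)"
proof -
  obtain u v w a b d where H: "u\<in>V" "v\<in>V" "w\<in>V" "cyc c u v w a b d" "2\<le>a" "2\<le>b" "2\<le>d"
    "M \<le> max a (max b d)" "3 \<le> max a (max b d)" using assms unfolding good_def by blast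
  have "(b\<le>a \<and> b\<le>d) \<or> (a \<le> b \<and> a \<le> d) \<or> (d \<le> a \<and> d \<le> b)" by linarith
  moreover
  { assume "b\<le>a \<and> b\<le>d"
    hence ?thesis using good_from[OF H(4) H(1-3) H(5-7) H(9)] H by blast }
  moreover
  { assume *: "a \<le> b \<and> a \<le> d"
    have c2: "cyc c w u v d a b" using cyc_rot[OF cyc_rot[OF H(4)]] .
    have "max d (max a b) = max a (max b d)" by (simp add: max_def)
    hence ?thesis using good_from[OF c2 H(3) H(1) H(2) H(7) H(5) H(6)] H * by auto }
  moreover
  { assume *: "d \<le> a \<and> d \<le> b"
    have c2: "cyc c v w u b d a" using cyc_rot[OF H(4)] .
    have "max b (max d a) = max a (max b d)" by (simp add: max_def)
    hence ?thesis using good_from[OF c2 H(2) H(3) H(1) H(6) H(7) H(5)] H * by auto }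
  ultimately show ?thesis by blast
qed

lemma good_iter: "c \<in> mut_class V b0 \<Longrightarrow> good V c M \<Longrightarrow> \<exists>c'\<in>mut_class V b0. good V c' (M+n)"
proof (induction n)
  case 0 thus ?case by auto
next
  case (Suc n)
  then obtain c' where "c'\<in>mut_class V b0" "good V c' (M+n)" by blast
  moreover then obtain k where "k\<in>V" "good V (mutate k c') (Suc (M+n))" using good_step by blast
  ultimately show ?case by (auto intro: mut_class.step)
qed

lemma good_entry: assumes "good V c M" shows "\<exists>x\<in>V. \<exists>y\<in>V. M \<le> c x y"
proof -
  obtain u v w a b d where H: "u\<in>V" "v\<in>V" "w\<in>V" "cyc c u v w a b d"
    "M \<le> max a (max b d)" using assms unfolding good_def by blast
  have "c u v = a" "c v w = b" "c w u = d" using H(4) by (auto simp: cyc_def)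
  thus ?thesis using H by (auto simp: max_def split: if_splits)
qed

definition pg :: "'v set \<Rightarrow> ('v\<Rightarrow>'v\<Rightarrow>nat) \<Rightarrow> bool" where
"pg V c \<longleftrightarrow> (\<exists>u\<in>V. \<exists>v\<in>V. \<exists>w\<in>V. \<exists>a b d. cyc c u v w a b d \<and> 1\<le>a \<and> 1\<le>b \<and> 1\<le>d \<and>
   (a = 1 \<longrightarrow> 2\<le>b \<and> 2\<le>d) \<and> (b = 1 \<longrightarrow> 2\<le>a \<and> 2\<le>d) \<and> (d = 1 \<longrightarrow> 2\<le>a \<and> 2\<le>b) \<and>
   \<not>(a = 2 \<and> b = 2 \<and> d = 2))"

lemma one_fix:
  assumes "cyc c u v w a 1 d" "u\<in>V" "v\<in>V" "w\<in>V" "2\<le>a" "2\<le>d"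
  shows "good V (mutate u c) 0"
proof -
  have "1 \<le> d*a" using assms by (simp add: Suc_le_eq)
  have c: "cyc (mutate u c) u w v d (d*a - 1) a" using cyc_mut[OF assms(1) \<open>1 \<le> d*a\<close>] .
  have "4 \<le> d*a" using mult_le_mono[OF assms(6) assms(5)] by simp
  hence 3: "3 \<le> d*a - 1" by simp
  hence m3: "3 \<le> max d (max (d*a-1) a)" by linarith
  have "2 \<le> d*a - 1" using 3 by simp
  show ?thesis by (rule goodI[OF c assms(2) assms(4) assms(3) assms(6) \<open>2 \<le> d*a - 1\<close> assms(5) _ m3]) simp
qed

lemma pg_good: assumes "pg V c" "c \<in> mut_class V b0" shows "\<exists>c'\<in>mut_class V b0. good V c' 0"
proof -
  obtain u v w a b d where H: "u\<in>V" "v\<in>V" "w\<in>V" "cyc c u v w a b d" "1\<le>a" "1\<le>b" "1\<le>d"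
   "(a = 1 \<longrightarrow> 2\<le>b \<and> 2\<le>d)" "(b = 1 \<longrightarrow> 2\<le>a \<and> 2\<le>d)" "(d = 1 \<longrightarrow> 2\<le>a \<and> 2\<le>b)"
   "\<not>(a = 2 \<and> b = 2 \<and> d = 2)" using assms(1) unfolding pg_def by blast
  have "(2\<le>a \<and> 2\<le>b \<and> 2\<le>d) \<or> a = 1 \<or> b = 1 \<or> d = 1" using H by linarith
  moreover
  { assume *: "2\<le>a \<and> 2\<le>b \<and> 2\<le>d"
    hence "3 \<le> max a (max b d)" using H(11) by (auto simp: max_def)
    hence "good V c 0" unfolding good_def using H * by blast
    hence ?thesis using assms(2) by blast }
  moreover
  { assume "b = 1"
    hence "good V (mutate u c) 0" using one_fix[of c u v w a d V] H by auto
    hence ?thesis using assms(2) H by (blast intro: mut_class.step) }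
  moreover
  { assume "a = 1"
    hence "cyc c w u v d 1 b" using cyc_rot[OF cyc_rot[OF H(4)]] by simp
    hence "good V (mutate w c) 0" using one_fix[of c w u v d b V] H \<open>a=1\<close> by auto
    hence ?thesis using assms(2) H by (blast intro: mut_class.step) }
  moreover
  { assume "d = 1"
    hence "cyc c v w u b 1 a" using cyc_rot[OF H(4)] by simp
    hence "good V (mutate v c) 0" using one_fix[of c v w u b a V] H \<open>d=1\<close> by auto
    hence ?thesis using assms(2) H by (blast intro: mut_class.step) }
  ultimately show ?thesis by blast
qed

lemma bounded:
  assumes "finite V" "mutation_finite V b"
  shows "\<exists>N. \<forall>c\<in>mut_class V b. \<forall>x\<in>V. \<forall>y\<in>V. c x y \<le> N"
proof -
  obtain S where S: "finite S" "\<forall>c\<in>mut_class V b. \<exists>d\<in>S. graph_iso V d c"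
    using assms(2) unfolding mutation_finite_def by blast
  define T where "T = (\<lambda>(d,i,j). d i j) ` (S \<times> V \<times> V)"
  have fT: "finite T" unfolding T_def using S(1) assms(1) by simp
  have "\<forall>c\<in>mut_class V b. \<forall>x\<in>V. \<forall>y\<in>V. c x y \<le> Max T"
  proof (intro ballI)
    fix c x y assume c: "c \<in> mut_class V b" and x: "x\<in>V" and y: "y\<in>V"
    obtain d f where d: "d\<in>S" "bij_betw f V V" "\<forall>i\<in>V. \<forall>j\<in>V. c (f i) (f j) = d i j"
      using S(2) c unfolding graph_iso_def by blast
    obtain i where i: "i\<in>V" "x = f i" using d(2) x unfolding bij_betw_def by blast
    obtain j where j: "j\<in>V" "y = f j" using d(2) y unfolding bij_betw_def by blast
    have "c x y = d i j" using d(3) i j by simp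
    moreover have "d i j \<in> T" unfolding T_def using d(1) i j by force
    ultimately show "c x y \<le> Max T" using fT by simp
  qed
  thus ?thesis by blast
qed



definition Z3at :: "('v\<Rightarrow>'v\<Rightarrow>nat) \<Rightarrow> 'v\<Rightarrow>'v\<Rightarrow>'v\<Rightarrow>bool" where
 "Z3at b x1 x2 x3 \<longleftrightarrow> b x1 x2 = 2 \<and> b x2 x3 = 2 \<and> b x3 x1 = 2 \<and> b x2 x1 = 0 \<and> b x3 x2 = 0 \<and> b x1 x3 = 0"

definition setup4 where
 "setup4 V b x1 x2 x3 y \<longleftrightarrow> is_graph V b \<and> Z3at b x1 x2 x3 \<and> x1\<in>V \<and> x2\<in>V \<and> x3\<in>V \<and> y\<in>V \<and>
   x1\<noteq>x2 \<and> x2\<noteq>x3 \<and> x1\<noteq>x3 \<and> y\<noteq>x1 \<and> y\<noteq>x2 \<and> y\<noteq>x3"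

lemma mut_kk: "mutate k c k j = c j k" by (simp add: mutate_def)
lemma mut_ik: "i\<noteq>k \<Longrightarrow> mutate k c i k = c k i" by (simp add: mutate_def)
lemma mut_ij: "i\<noteq>k \<Longrightarrow> j\<noteq>k \<Longrightarrow> mutate k c i j = (c i j + c i k * c k j) - (c j i + c j k * c k i)"
proof -
  assume "i\<noteq>k" "j\<noteq>k"
  hence "mutate k c i j = nat (int (c i j + c i k * c k j) - int (c j i + c j k * c k i))"
    unfolding mutate_def by (simp only: if_False of_nat_add)
  also have "\<dots> = (c i j + c i k * c k j) - (c j i + c j k * c k i)" by (simp only: nat_minus_as_int)
  finally show ?thesis .
qed

lemma gr0: "is_graph V b \<Longrightarrow> i\<in>V \<Longrightarrow> j\<in>V \<Longrightarrow> 0 < b i j \<Longrightarrow> b j i = 0"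
  unfolding is_graph_def by (metis less_irrefl)

lemma pgI: "cyc c u v w a b d \<Longrightarrow> u\<in>V \<Longrightarrow> v\<in>V \<Longrightarrow> w\<in>V \<Longrightarrow> 1\<le>a \<Longrightarrow> 1\<le>b \<Longrightarrow> 1\<le>d \<Longrightarrow>
   (a = 1 \<longrightarrow> 2\<le>b \<and> 2\<le>d) \<Longrightarrow> (b = 1 \<longrightarrow> 2\<le>a \<and> 2\<le>d) \<Longrightarrow> (d = 1 \<longrightarrow> 2\<le>a \<and> 2\<le>b) \<Longrightarrow>
   \<not>(a = 2 \<and> b = 2 \<and> d = 2) \<Longrightarrow> pg V c"
  unfolding pg_def by blast

lemma setupD: assumes "setup4 V b x1 x2 x3 y"
  shows "is_graph V b" "x1\<in>V" "x2\<in>V" "x3\<in>V" "y\<in>V"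
   "b x1 x2 = 2" "b x2 x3 = 2" "b x3 x1 = 2" "b x2 x1 = 0" "b x3 x2 = 0" "b x1 x3 = 0"
   "x1\<noteq>x2" "x2\<noteq>x3" "x1\<noteq>x3" "y\<noteq>x1" "y\<noteq>x2" "y\<noteq>x3"
   "x2\<noteq>x1" "x3\<noteq>x2" "x3\<noteq>x1" "x1\<noteq>y" "x2\<noteq>y" "x3\<noteq>y"
  using assms unfolding setup4_def Z3at_def by auto

lemma case1: assumes "setup4 V b x1 x2 x3 y" "0 < b y x1" "b x2 y = 0"
  shows "\<exists>c\<in>mut_class V b. pg V c"
proof -
  note S = setupD[OF assms(1)]
  have q: "b x1 y = 0" using gr0[of V b y x1] assms(2) S by auto
  let ?m = "b y x1" and ?p = "b y x2"
  let ?c = "mutate x1 b"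
  have "cyc ?c x1 y x2 ?m (?p + 2*?m) 2" unfolding cyc_def
    using S q assms(3) by (simp add: mut_kk mut_ik mut_ij)
  hence "pg V ?c" by (rule pgI) (insert assms(2) S, auto)
  moreover have "?c \<in> mut_class V b" using S by (auto intro: mut_class.intros)
  ultimately show ?thesis by blast
qed

lemma case2: assumes "setup4 V b x1 x2 x3 y" "0 < b x1 y" "b y x3 = 0"
  shows "\<exists>c\<in>mut_class V b. pg V c"
proof -
  note S = setupD[OF assms(1)]
  have q: "b y x1 = 0" using gr0[of V b x1 y] assms(2) S by auto
  let ?m = "b x1 y" and ?k = "b x3 y"
  let ?c = "mutate x1 b"
  have "cyc ?c x1 x3 y 2 (?k + 2*?m) ?m" unfolding cyc_def
    using S q assms(3) by (simp add: mut_kk mut_ik mut_ij)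
  hence "pg V ?c" by (rule pgI) (insert assms(2) S, auto)
  moreover have "?c \<in> mut_class V b" using S by (auto intro: mut_class.intros)
  ultimately show ?thesis by blast
qed

lemma case3: assumes "setup4 V b x1 x2 x3 y" "0 < b y x1" "0 < b x2 y"
   "\<not> (b y x1 = 1 \<and> b x2 y = 1)" "\<not> (b y x1 = 2 \<and> b x2 y = 2)"
  shows "\<exists>c\<in>mut_class V b. pg V c"
proof -
  note S = setupD[OF assms(1)]
  have q: "b x1 y = 0" "b y x2 = 0" using gr0[of V b y x1] gr0[of V b x2 y] assms(2,3) S by auto
  have "cyc b y x1 x2 (b y x1) 2 (b x2 y)" using S q unfolding cyc_def by simp
  hence "pg V b" by (rule pgI) (insert assms(2-5) S, auto)
  thus ?thesis by (blast intro: mut_class.refl)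
qed

lemma case4: assumes "setup4 V b x1 x2 x3 y" "b y x1 = 1" "b x2 y = 1" "b y x3 = 0" "b x3 y = 0"
  shows "\<exists>c\<in>mut_class V b. pg V c"
proof -
  note S = setupD[OF assms(1)]
  have q: "b x1 y = 0" "b y x2 = 0" using gr0[of V b y x1] gr0[of V b x2 y] assms(2,3) S by auto
  let ?c = "mutate y b"
  have "cyc ?c x1 x2 x3 1 2 2" unfolding cyc_def
    using S q assms(2-5) by (simp add: mut_kk mut_ik mut_ij)
  hence "pg V ?c" by (rule pgI) (insert S, auto)
  moreover have "?c \<in> mut_class V b" using S by (auto intro: mut_class.intros)
  ultimately show ?thesis by blast
qed

lemma case5: assumes "setup4 V b x1 x2 x3 y" "b y x1 = 2" "b x2 y = 2" "b y x3 = 0" "b x3 y = 0"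
  shows "\<exists>c\<in>mut_class V b. pg V c"
proof -
  note S = setupD[OF assms(1)]
  have q: "b x1 y = 0" "b y x2 = 0" using gr0[of V b y x1] gr0[of V b x2 y] assms(2,3) S by auto
  let ?c1 = "mutate x3 b"
  have c1: "?c1 x3 x2 = 2" "?c1 x1 x3 = 2" "?c1 x2 x1 = 2" "?c1 x2 x3 = 0" "?c1 x3 x1 = 0" "?c1 x1 x2 = 0"
     "?c1 y x1 = 2" "?c1 x1 y = 0" "?c1 x2 y = 2" "?c1 y x2 = 0" "?c1 y x3 = 0" "?c1 x3 y = 0"
    using S q assms(2-5) by (simp_all add: mut_kk mut_ik mut_ij)
  let ?c = "mutate x1 ?c1"
  have "cyc ?c y x3 x1 4 2 2" unfolding cyc_def
    using S c1 by (simp add: mut_kk mut_ik mut_ij)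
  hence "pg V ?c" by (rule pgI) (insert S, auto)
  moreover have "?c \<in> mut_class V b" using S by (auto intro: mut_class.intros)
  ultimately show ?thesis by blast
qed



definition Cond :: "('v\<Rightarrow>'v\<Rightarrow>nat) \<Rightarrow> 'v\<Rightarrow>'v\<Rightarrow>'v\<Rightarrow>'v\<Rightarrow>bool" where
 "Cond b x1 x2 x3 y \<longleftrightarrow> (0<b y x1 \<and> b x2 y = 0) \<or> (0 < b x1 y \<and> b y x3 = 0) \<or>
   (0<b y x1 \<and> 0 < b x2 y \<and> \<not> (b y x1 = 1 \<and> b x2 y = 1) \<and> \<not> (b y x1 = 2 \<and> b x2 y = 2)) \<or>
   (b y x1 = 1 \<and> b x2 y = 1 \<and> b y x3 = 0 \<and> b x3 y = 0) \<or>
   (b y x1 = 2 \<and> b x2 y = 2 \<and> b y x3 = 0 \<and> b x3 y = 0)"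

lemma one_label: "setup4 V b x1 x2 x3 y \<Longrightarrow> Cond b x1 x2 x3 y \<Longrightarrow> \<exists>c\<in>mut_class V b. pg V c"
  unfolding Cond_def using case1 case2 case3 case4 case5 by metis

definition grp :: "nat\<Rightarrow>nat\<Rightarrow>nat\<Rightarrow>nat\<Rightarrow>nat\<Rightarrow>nat\<Rightarrow>bool" where
 "grp p1 q1 p2 q2 p3 q3 \<longleftrightarrow> ((0<p1 \<and> q2 = 0) \<or> (0 < q1 \<and> p3 = 0) \<or>
   (0<p1 \<and> 0 < q2 \<and> \<not> (p1 = 1 \<and> q2 = 1) \<and> \<not> (p1 = 2 \<and> q2 = 2)) \<or>
   (p1 = 1 \<and> q2 = 1 \<and> p3 = 0 \<and> q3 = 0) \<or> (p1 = 2 \<and> q2 = 2 \<and> p3 = 0 \<and> q3 = 0))"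

lemma comb1: fixes p1 q1 p2 q2 p3 q3 :: nat
  assumes "p1 = 0 \<or> q1 = 0" "p2 = 0 \<or> q2 = 0" "p3 = 0 \<or> q3 = 0" "0<p1"
   "\<not>(0<p1 \<and> q2 = 0)" "\<not>(0<q3 \<and> p2 = 0)" "\<not>(0<p3 \<and> q1 = 0)"
  shows "grp p1 q1 p2 q2 p3 q3"
proof -
  have "0 < q2" using assms(4,5) by simp
  hence "p2 = 0" using assms(2) by simp
  have "q1 = 0" using assms(1,4) by simp
  have "p3 = 0" using assms(7) \<open>q1 = 0\<close> by simp
  have "q3 = 0" using assms(6) \<open>p2 = 0\<close> by simp
  show ?thesis unfolding grp_def using \<open>0<q2\<close> \<open>p3 = 0\<close> \<open>q3 = 0\<close> assms(4) by auto
qed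

lemma comb: fixes p1 q1 p2 q2 p3 q3 :: nat
  assumes z: "p1 = 0 \<or> q1 = 0" "p2 = 0 \<or> q2 = 0" "p3 = 0 \<or> q3 = 0" and "0 < p1+q1+p2+q2+p3+q3"
  shows "grp p1 q1 p2 q2 p3 q3 \<or> grp p2 q2 p3 q3 p1 q1 \<or> grp p3 q3 p1 q1 p2 q2"
proof (cases "(0<p1 \<and> q2 = 0) \<or> (0<q1 \<and> p3 = 0) \<or> (0<p2 \<and> q3 = 0) \<or> (0<q2 \<and> p1 = 0) \<or>
              (0<p3 \<and> q1 = 0) \<or> (0<q3 \<and> p2 = 0)")
  case True thus ?thesis unfolding grp_def by (elim disjE) simp_all
next
  case False
  have n: "\<not>(0<p1 \<and> q2 = 0)" "\<not>(0<q1 \<and> p3 = 0)" "\<not>(0<p2 \<and> q3 = 0)" "\<not>(0<q2 \<and> p1 = 0)"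
     "\<not>(0<p3 \<and> q1 = 0)" "\<not>(0<q3 \<and> p2 = 0)" using False by simp_all
  have "0<p1 \<or> 0<p2 \<or> 0<p3"
  proof (rule ccontr)
    assume "\<not> (0<p1 \<or> 0<p2 \<or> 0<p3)"
    hence "p1 = 0" "p2 = 0" "p3 = 0" by auto
    thus False using n assms(4) by auto
  qed
  moreover
  { assume "0<p1" hence ?thesis using comb1[OF z _ n(1) n(6) n(5)] by simp }
  moreover
  { assume "0<p2" hence ?thesis using comb1[OF z(2,3,1) _ n(3) n(2) n(1)] by simp }
  moreover
  { assume "0<p3" hence ?thesis using comb1[OF z(3,1,2) _ n(5) n(4) n(3)] by simp }
  ultimately show ?thesis by blast
qed

lemma CondG: "Cond b x1 x2 x3 y = grp (b y x1) (b x1 y) (b y x2) (b x2 y) (b y x3) (b x3 y)"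
  unfolding Cond_def grp_def by simp

lemma setup_rot: "setup4 V b x1 x2 x3 y \<Longrightarrow> setup4 V b x2 x3 x1 y"
  by (auto simp: setup4_def Z3at_def)

lemma four: assumes "setup4 V b x1 x2 x3 y"
  "0 < b y x1 + b x1 y + b y x2 + b x2 y + b y x3 + b x3 y"
  shows "\<exists>c\<in>mut_class V b. pg V c"
proof -
  have S: "is_graph V b" "x1\<in>V" "x2\<in>V" "x3\<in>V" "y\<in>V" using assms(1) by (auto simp: setup4_def)
  have z: "b y x1 = 0 \<or> b x1 y = 0" "b y x2 = 0 \<or> b x2 y = 0" "b y x3 = 0 \<or> b x3 y = 0"
    using S unfolding is_graph_def by auto
  have "Cond b x1 x2 x3 y \<or> Cond b x2 x3 x1 y \<or> Cond b x3 x1 x2 y"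
    unfolding CondG using comb[OF z assms(2)] .
  thus ?thesis using one_label[OF assms(1)] one_label[OF setup_rot[OF assms(1)]]
    one_label[OF setup_rot[OF setup_rot[OF assms(1)]]] by blast
qed

lemma exit_step: "(a, z) \<in> R\<^sup>* \<Longrightarrow> a \<in> X \<Longrightarrow> z \<notin> X \<Longrightarrow> \<exists>u w. (u, w) \<in> R \<and> u \<in> X \<and> w \<notin> X"
proof (induction rule: rtrancl_induct)
  case base thus ?case by simp
next
  case (step y z) thus ?case by (cases "y \<in> X") auto
qed



theorem lemma6:
  fixes V :: "'v set" and b :: "'v \<Rightarrow> 'v \<Rightarrow> nat"
  assumes "is_graph V b" and "mutation_finite V b" and "graph_connected V b"
    and "card V \<ge> 4"
  shows "\<not> contains_Z3 V b"
proof
  assume "contains_Z3 V b"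
  then obtain x1 x2 x3 where X: "x1\<in>V" "x2\<in>V" "x3\<in>V" "x1 \<noteq> x2" "x2 \<noteq> x3" "x1 \<noteq> x3"
     "Z3at b x1 x2 x3" unfolding contains_Z3_def Z3at_def by blast
  have fV: "finite V" using assms(1) unfolding is_graph_def by simp
  have "\<not> V \<subseteq> {x1,x2,x3}"
  proof
    assume "V \<subseteq> {x1,x2,x3}"
    hence "card V \<le> card {x1,x2,x3}" by (intro card_mono) auto
    also have "\<dots> \<le> 3" by (simp add: card_insert_if)
    finally show False using assms(4) by simp
  qed
  then obtain v where v: "v\<in>V" "v \<notin> {x1,x2,x3}" by blast
  let ?R = "{(u, w). u \<in> V \<and> w \<in> V \<and> (b u w > 0 \<or> b w u > 0)}"
  have "(x1, v) \<in> ?R\<^sup>*" using assms(3) X(1) v(1) unfolding graph_connected_def by blast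
  then obtain u w where uw: "(u,w) \<in> ?R" "u \<in> {x1,x2,x3}" "w \<notin> {x1,x2,x3}"
    using exit_step[of x1 v ?R "{x1,x2,x3}"] v by auto
  have st: "setup4 V b x1 x2 x3 w" using X uw assms(1) unfolding setup4_def by auto
  have "0 < b w x1 + b x1 w + b w x2 + b x2 w + b w x3 + b x3 w" using uw by auto
  hence "\<exists>c\<in>mut_class V b. pg V c" by (rule four[OF st])
  then obtain c where c: "c \<in> mut_class V b" "pg V c" by blast
  then obtain c' where c': "c' \<in> mut_class V b" "good V c' 0" using pg_good by blast
  obtain N where N: "\<forall>c\<in>mut_class V b. \<forall>x\<in>V. \<forall>y\<in>V. c x y \<le> N" using bounded[OF fV assms(2)] by blast
  obtain c'' where "c'' \<in> mut_class V b" "good V c'' (0 + Suc N)" using good_iter[OF c'] by blast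
  moreover then obtain x y where "x\<in>V" "y\<in>V" "Suc N \<le> c'' x y" using good_entry by fastforce
  ultimately show False using N by fastforce
qed


end
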